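(* Let $g\ge 1$, let $\mathfrak{m}_g$ be a rooted unicellular map of genus $g$, and let $\mathfrak{p}=((\mathfrak{m}_{g},\tau),(\mathfrak{m}_{g_1},\tau_1),\ldots,(\mathfrak{m}_{g_{r-1}},\tau_{r-1}),(\mathfrak{m}_0,\varnothing))$ be a blueprint of $\mathfrak{m}_g$ consisting of $r$ slicings. Then $1\le r\le g$, and the planar tree $\mathfrak{m}_0$ equipped with the induced vertex labels $(\sigma_v)_v$, $\sigma_v\in\mathbb{F}_2^r$ (defined in the context), is a $\lambda$-tree. In particular, $(\mathfrak{m}_g,\mathfrak{p})$ induces a unique $\lambda$-tree $\mathfrak{m}_0^{(\sigma_v)_v}$.
   Context: A rooted unicellular map with $m$ edges is given by permutations $\sigma$, $\alpha$ on the half-edge set $H=[2m]$, where $\alpha$ is a fixed-point-free involution (edges), the cycles of $\sigma$ are the vertices (with $\sigma$ encoding counterclockwise rotation around a vertex), and $\gamma=\alpha\circ\sigma$ has exactly one cycle (the boundary component); one half-edge is distinguished as the root. Its genus $g$ is given by $v-m+1=2-2g$, $v$ the number of vertices; genus $0$ means a rooted planar tree. The order $<_\gamma$ on half-edges is the order of appearance along the cycle $\gamma$ starting from the root; vertices are compared via their $<_\gamma$-minimal half-edges. A trisection is a half-edge $\tau$ with $\tau\le_\gamma\sigma^{-1}(\tau)$ which is not the $<_\gamma$-minimal half-edge of its vertex; a map of genus $g$ has exactly $2g$ trisections. Slicing (Chapuy, "A new combinatorial identity for unicellular maps, via a direct bijective approach", 2011): given a unicellular map $\mathfrak{m}$ of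 genus $g'$ and a trisection $\tau$, Chapuy's slicing map $\Xi$ yields $\Xi(\mathfrak{m},\tau)=(\mathfrak{m}',v_1,\ldots,v_{2k+1})$, where $k\ge 1$, $\mathfrak{m}'$ is a unicellular map of genus $g'-k$, and $v_1,\ldots,v_{2k+1}$ are the vertices of $\mathfrak{m}'$ created by slicing the vertex of $\tau$, ordered by $<_\gamma$; $\Xi$ is a bijection whose inverse is the gluing map $\Lambda$. A blueprint of $(\mathfrak{m}_g,\tau)$ is a sequence $((\mathfrak{m}_{g},\tau),(\mathfrak{m}_{g_1},\tau_1),\ldots,(\mathfrak{m}_{g_{r-1}},\tau_{r-1}),(\mathfrak{m}_0,\varnothing))$ where each $\tau_i$ is a trisection of $\mathfrak{m}_{g_i}$ ($\mathfrak{m}_{g_0}=\mathfrak{m}_g,\tau_0=\tau$), $(\mathfrak{m}_{g_{i+1}},V_{i+1})=\Xi(\mathfrak{m}_{g_i},\tau_i)$ for $0\le i<r$ ($V_{i+1}$ the set of created vertices; this is the $(i+1)$-st slicing), and $\mathfrak{m}_{g_r}=\mathfrak{m}_0$ has genus $0$. A blueprint of $\mathfrak{m}_g$ is a blueprint of $(\mathfrak{m}_g,\tau)$ for some trisection $\tau$. Induced labels: a vertex of $\mathfrak{m}_0$ is involved in the $s$-th slicing if it is one of the vertices of $V_s$ or arises from one of them by later slicings. First give each vertex $v$ of $\mathfrak{m}_0$ the label $\sigma'_v\in\mathbb{F}_2^r$ whose $s$-th coordinate is $1$ iff $v$ is involved in the $s$-th slicing. Then reduce: for $i=r,r-1,\ldots,2$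 in turn, for every vertex $v$ with $\sigma_v|_i=1$ that is not the $<_\gamma$-minimal vertex among the vertices $u$ with $\sigma_u|_i=1$ ("regular at $i$"), set $\sigma_v|_h=0$ for all $h<i$; the resulting labels are $(\sigma_v)_v$. $\lambda$-tree: a rooted planar tree with boundary component $\gamma$ in which each vertex $v$ carries a label $\sigma_v\in\mathbb{F}_2^r$ such that (i) $\sum_{v,h}\sigma_v|_h=2g+r$ (counting the entries equal to $1$), where $1\le r\le g$; (ii) for each $h$, the number of vertices $v$ with $\sigma_v|_h=1$ is odd; (iii) for $h<i$, at most one vertex $v$ has $\sigma_v|_h=\sigma_v|_i=1$, and any such vertex is $<_\gamma$-minimal among all vertices $u$ with $\sigma_u|_i=1$. *)

theory Defs
  imports "HOL-Combinatorics.Permutations"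
begin

text \<open>A map with n edges: half-edge set H = {1..2n}, vertex permutation sig,
  edge involution alp, root half-edge.\<close>

record umap =
  edges :: nat
  sig :: "nat \<Rightarrow> nat"
  alp :: "nat \<Rightarrow> nat"
  root :: nat

definition hset :: "umap \<Rightarrow> nat set" where
  "hset m = {1..2 * edges m}"

definition face :: "umap \<Rightarrow> nat \<Rightarrow> nat" where
  "face m = alp m \<circ> sig m"

definition unicellular :: "umap \<Rightarrow> bool" where
  "unicellular m \<longleftrightarrow>
     sig m permutes hset m \<and> alp m permutes hset m \<and>
     (\<forall>h\<in>hset m. alp m h \<noteq> h \<and> alp m (alp m h) = h) \<and>
     root m \<in> hset m \<and>
     (\<forall>h\<in>hset m. \<exists>j. (face m ^^ j) (root m) = h)"

definition vtx :: "umap \<Rightarrow> nat \<Rightarrow> nat set" where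
  "vtx m h = {(sig m ^^ j) h | j. True}"

definition vertices :: "umap \<Rightarrow> nat set set" where
  "vertices m = vtx m ` hset m"

text \<open>Genus from Euler's formula  v - n + 1 = 2 - 2g.\<close>
definition genus :: "umap \<Rightarrow> nat" where
  "genus m = (edges m + 1 - card (vertices m)) div 2"

text \<open>Position along the boundary cycle, starting from the root (order <_gamma).\<close>
definition pos :: "umap \<Rightarrow> nat \<Rightarrow> nat" where
  "pos m h = (LEAST j. (face m ^^ j) (root m) = h)"

definition vpos :: "umap \<Rightarrow> nat set \<Rightarrow> nat" where
  "vpos m V = Min (pos m ` V)"

definition trisection :: "umap \<Rightarrow> nat \<Rightarrow> bool" where
  "trisection m t \<longleftrightarrow> t \<in> hset m \<and> pos m t \<le> pos m (inv (sig m) t) \<and>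
     (\<exists>h\<in>vtx m t. pos m h < pos m t)"

text \<open>Properties of Chapuy's slicing map Xi(m,tau) = (m', [v_1,...,v_{2k+1}]):
  k >= 1, m' unicellular of genus g'-k on the same half-edges/edges/root,
  v_1 < ... < v_{2k+1} (by <_gamma of m') are the vertices of m' created by
  slicing the vertex of tau; all other vertices are unchanged.\<close>
definition slicing_map :: "(umap \<Rightarrow> nat \<Rightarrow> umap \<times> nat set list) \<Rightarrow> bool" where
  "slicing_map Xi \<longleftrightarrow>
    (\<forall>m t. unicellular m \<and> trisection m t \<longrightarrow>
      (case Xi m t of (m', vs) \<Rightarrow>
        (\<exists>k\<ge>1. unicellular m' \<and> edges m' = edges m \<and> alp m' = alp m \<and>
          root m' = root m \<and> genus m' + k = genus m \<and>
          length vs = 2 * k + 1 \<and> distinct vs \<and> set vs \<subseteq> vertices m' \<and>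
          \<Union> (set vs) = vtx m t \<and>
          vertices m' = (vertices m - {vtx m t}) \<union> set vs \<and>
          sorted_wrt (\<lambda>u w. vpos m' u < vpos m' w) vs)))"

text \<open>ms = [m_g, m_{g_1}, ..., m_0], ts = [tau, tau_1, ..., tau_{r-1}],
  Vs ! (s-1) = list of created vertices of the s-th slicing; r = length ts.\<close>
definition blueprint ::
  "(umap \<Rightarrow> nat \<Rightarrow> umap \<times> nat set list) \<Rightarrow> umap \<Rightarrow> umap list \<Rightarrow> nat list \<Rightarrow> nat set list list \<Rightarrow> bool" where
  "blueprint Xi m ms ts Vs \<longleftrightarrow>
     length ts \<ge> 1 \<and> length ms = length ts + 1 \<and> length Vs = length ts \<and>
     ms ! 0 = m \<and>
     (\<forall>i < length ts. trisection (ms ! i) (ts ! i) \<and>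
        Xi (ms ! i) (ts ! i) = (ms ! Suc i, Vs ! i)) \<and>
     genus (ms ! length ts) = 0"

text \<open>Labels in F_2^r are represented as predicates on coordinates 1..r.\<close>
definition raw_labels :: "nat set list list \<Rightarrow> nat set \<Rightarrow> nat \<Rightarrow> bool" where
  "raw_labels Vs v s \<longleftrightarrow> s \<in> {1..length Vs} \<and> (\<exists>w\<in>set (Vs ! (s - 1)). v \<subseteq> w)"

definition regular_at :: "umap \<Rightarrow> (nat set \<Rightarrow> nat \<Rightarrow> bool) \<Rightarrow> nat \<Rightarrow> nat set \<Rightarrow> bool" where
  "regular_at m lab i v \<longleftrightarrow> lab v i \<and>
     (\<exists>u\<in>vertices m. lab u i \<and> vpos m u < vpos m v)"

definition red_step :: "umap \<Rightarrow> nat \<Rightarrow> (nat set \<Rightarrow> nat \<Rightarrow> bool) \<Rightarrow> nat set \<Rightarrow> nat \<Rightarrow> bool" where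
  "red_step m i lab = (\<lambda>v h. if regular_at m lab i v \<and> h < i then False else lab v h)"

text \<open>red_from m lab i applies the reduction steps i, i-1, ..., 2 in turn.\<close>
fun red_from :: "umap \<Rightarrow> (nat set \<Rightarrow> nat \<Rightarrow> bool) \<Rightarrow> nat \<Rightarrow> nat set \<Rightarrow> nat \<Rightarrow> bool" where
  "red_from m lab 0 = lab"
| "red_from m lab (Suc i) =
     (if Suc i < 2 then lab else red_from m (red_step m (Suc i) lab) i)"

definition induced_labels :: "umap \<Rightarrow> nat set list list \<Rightarrow> nat set \<Rightarrow> nat \<Rightarrow> bool" where
  "induced_labels m0 Vs = red_from m0 (raw_labels Vs) (length Vs)"

definition lambda_tree :: "nat \<Rightarrow> nat \<Rightarrow> umap \<Rightarrow> (nat set \<Rightarrow> nat \<Rightarrow> bool) \<Rightarrow> bool" where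
  "lambda_tree g r m lab \<longleftrightarrow>
     unicellular m \<and> genus m = 0 \<and> 1 \<le> r \<and> r \<le> g \<and>
     (\<Sum>v\<in>vertices m. card {h\<in>{1..r}. lab v h}) = 2 * g + r \<and>
     (\<forall>h\<in>{1..r}. odd (card {v\<in>vertices m. lab v h})) \<and>
     (\<forall>h i. 1 \<le> h \<and> h < i \<and> i \<le> r \<longrightarrow>
        card {v\<in>vertices m. lab v h \<and> lab v i} \<le> 1 \<and>
        (\<forall>v\<in>vertices m. lab v h \<and> lab v i \<longrightarrow>
           (\<forall>u\<in>vertices m. lab u i \<longrightarrow> vpos m v \<le> vpos m u)))"

end

theory Submission
  imports Defs "HOL-Combinatorics.Cycles"
begin


lemma hset_finite: "finite (hset m)" by (simp add: hset_def)

lemma vtx_iff: "x \<in> vtx m h \<longleftrightarrow> (\<exists>j. x = (sig m ^^ j) h)"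
  by (simp add: vtx_def)

lemma vtx_self: "h \<in> vtx m h"
  unfolding vtx_iff by (rule exI[of _ 0]) simp

lemma vtx_sub: assumes "unicellular m" "h \<in> hset m" shows "vtx m h \<subseteq> hset m"
proof -
  have p: "sig m permutes hset m" using assms(1) by (simp add: unicellular_def)
  show ?thesis
  proof
    fix x assume "x \<in> vtx m h"
    then obtain j where "x = (sig m ^^ j) h" unfolding vtx_iff by blast
    then show "x \<in> hset m" using permutes_in_image[OF permutes_funpow[OF p]] assms(2) by simp
  qed
qed

lemma vtx_mem_eq: assumes "unicellular m" "a \<in> vtx m h" shows "vtx m a = vtx m h"
proof -
  have p: "sig m permutes hset m" using assms(1) by (simp add: unicellular_def)
  have perm: "permutation (sig m)" using p hset_finite permutation_permutes by blast
  obtain i where i: "a = (sig m ^^ i) h" using assms(2) unfolding vtx_iff by blast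
  obtain n where n: "sig m ^^ n = id" "n > i" using permutation_is_nilpotent'[OF perm] by metis
  have "(sig m ^^ (n - i + i)) h = h" using n by simp
  then have hb: "h = (sig m ^^ (n - i)) a" using i by (simp add: funpow_add)
  show ?thesis
  proof
    show "vtx m a \<subseteq> vtx m h"
    proof
      fix x assume "x \<in> vtx m a"
      then obtain j where "x = (sig m ^^ j) a" unfolding vtx_iff by blast
      then have "x = (sig m ^^ (j+i)) h" using i by (simp add: funpow_add)
      then show "x \<in> vtx m h" unfolding vtx_iff by blast
    qed
    show "vtx m h \<subseteq> vtx m a"
    proof
      fix x assume "x \<in> vtx m h"
      then obtain j where "x = (sig m ^^ j) h" unfolding vtx_iff by blast
      then have "x = (sig m ^^ (j+(n-i))) a" using hb by (simp add: funpow_add)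
      then show "x \<in> vtx m a" unfolding vtx_iff by blast
    qed
  qed
qed

lemma vertices_disj: assumes "unicellular m" "V \<in> vertices m" "W \<in> vertices m" "V \<inter> W \<noteq> {}"
  shows "V = W"
proof -
  obtain a b c where ab: "V = vtx m a" "W = vtx m b" and c: "c \<in> V" "c \<in> W"
    using assms(2,3,4) unfolding vertices_def by blast
  have "vtx m c = V" using vtx_mem_eq[OF assms(1)] ab c by blast
  moreover have "vtx m c = W" using vtx_mem_eq[OF assms(1)] ab c by blast
  ultimately show ?thesis by simp
qed

lemma vertices_ne: "V \<in> vertices m \<Longrightarrow> V \<noteq> {}"
  unfolding vertices_def using vtx_self by blast

lemma vertices_sub: "unicellular m \<Longrightarrow> V \<in> vertices m \<Longrightarrow> V \<subseteq> hset m"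
  unfolding vertices_def using vtx_sub by blast

lemma vertices_finite: "finite (vertices m)"
  unfolding vertices_def using hset_finite by simp

lemma pos_spec: assumes "unicellular m" "a \<in> hset m"
  shows "(face m ^^ pos m a) (root m) = a"
proof -
  have "\<forall>h\<in>hset m. \<exists>j. (face m ^^ j) (root m) = h"
    using assms(1) unfolding unicellular_def by (elim conjE)
  then have "\<exists>j. (face m ^^ j) (root m) = a" using assms(2) by blast
  then show ?thesis unfolding pos_def by (rule LeastI_ex)
qed

lemma pos_inj: assumes "unicellular m" "a \<in> hset m" "b \<in> hset m" "pos m a = pos m b"
  shows "a = b"
  using pos_spec[OF assms(1,2)] pos_spec[OF assms(1,3)] assms(4) by metis

lemma vpos_attained: assumes "unicellular m" "V \<in> vertices m"
  shows "\<exists>h\<in>V. vpos m V = pos m h"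
proof -
  have "finite V" using vertices_sub[OF assms] hset_finite finite_subset by blast
  then have "Min (pos m ` V) \<in> pos m ` V" using vertices_ne[OF assms(2)] by simp
  then show ?thesis unfolding vpos_def by auto
qed

lemma vpos_inj: assumes "unicellular m" "V \<in> vertices m" "W \<in> vertices m" "vpos m V = vpos m W"
  shows "V = W"
proof -
  obtain a b where "a \<in> V" "b \<in> W" "vpos m V = pos m a" "vpos m W = pos m b"
    using vpos_attained assms by metis
  moreover have "a \<in> hset m" "b \<in> hset m" using calculation vertices_sub assms by blast+
  ultimately have "a = b" using pos_inj assms by metis
  then show ?thesis using vertices_disj assms \<open>a\<in>V\<close> \<open>b\<in>W\<close> by blast
qed



locale bp =
  fixes Xi :: "umap \<Rightarrow> nat \<Rightarrow> umap \<times> nat set list"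
    and ms :: "umap list" and ts :: "nat list" and Vs :: "nat set list list"
  assumes Xi: "slicing_map Xi" and u0: "unicellular (ms ! 0)"
    and bpr: "blueprint Xi (ms ! 0) ms ts Vs"
begin

abbreviation "r \<equiv> length ts"
abbreviation "M i \<equiv> ms ! i"
abbreviation "V0 \<equiv> vertices (M r)"
abbreviation "Y i \<equiv> vtx (M i) (ts ! i)"

lemma step_raw: assumes "i < r" "unicellular (M i)"
  shows "\<exists>k\<ge>1. unicellular (M (Suc i)) \<and> genus (M (Suc i)) + k = genus (M i) \<and>
     length (Vs!i) = 2*k+1 \<and> distinct (Vs!i) \<and> set (Vs!i) \<subseteq> vertices (M (Suc i)) \<and>
     \<Union> (set (Vs!i)) = Y i \<and> vertices (M (Suc i)) = (vertices (M i) - {Y i}) \<union> set (Vs!i) \<and>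
     Y i \<in> vertices (M i)"
proof -
  have t: "trisection (M i) (ts!i)" and e: "Xi (M i) (ts!i) = (M (Suc i), Vs!i)"
    using bpr assms(1) unfolding blueprint_def by auto
  have "ts!i \<in> hset (M i)" using t unfolding trisection_def by auto
  then have "Y i \<in> vertices (M i)" unfolding vertices_def by auto
  with Xi[unfolded slicing_map_def, rule_format, OF conjI[OF assms(2) t]] e show ?thesis by auto
qed

lemma uni: "i \<le> r \<Longrightarrow> unicellular (M i)"
proof (induction i)
  case 0 then show ?case using u0 by simp
next
  case (Suc i)
  then have "i < r" "unicellular (M i)" by auto
  from step_raw[OF this] show ?case by blast
qed

lemma step: assumes "i < r"
  shows "\<exists>k\<ge>1. genus (M (Suc i)) + k = genus (M i) \<and>
     length (Vs!i) = 2*k+1 \<and> distinct (Vs!i) \<and> set (Vs!i) \<subseteq> vertices (M (Suc i)) \<and>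
     \<Union> (set (Vs!i)) = Y i \<and> vertices (M (Suc i)) = (vertices (M i) - {Y i}) \<union> set (Vs!i) \<and>
     Y i \<in> vertices (M i)"
  using step_raw[OF assms uni] assms by auto

lemma genus_sum: "n \<le> r \<Longrightarrow> (\<Sum>i<n. length (Vs!i)) + 2 * genus (M n) = 2 * genus (M 0) + n
   \<and> n + genus (M n) \<le> genus (M 0)"
proof (induction n)
  case 0 then show ?case by simp
next
  case (Suc n)
  then obtain k where "k \<ge> 1" "genus (M (Suc n)) + k = genus (M n)" "length (Vs!n) = 2*k+1"
    using step[of n] by auto
  then show ?case using Suc by auto
qed

lemma refine: "i \<le> j \<Longrightarrow> j \<le> r \<Longrightarrow> x \<in> vertices (M j) \<Longrightarrow> \<exists>w\<in>vertices (M i). x \<subseteq> w"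
proof (induction j arbitrary: x)
  case 0 then show ?case by auto
next
  case (Suc j)
  show ?case
  proof (cases "i = Suc j")
    case True then show ?thesis using Suc by auto
  next
    case False
    then have ij: "i \<le> j" using Suc by auto
    have jr: "j < r" using Suc(3) by simp
    from step[OF jr] have
      s: "\<Union> (set (Vs!j)) = Y j" "vertices (M (Suc j)) = (vertices (M j) - {Y j}) \<union> set (Vs!j)"
         "Y j \<in> vertices (M j)" by blast+
    have "\<exists>x'\<in>vertices (M j). x \<subseteq> x'"
    proof (cases "x \<in> set (Vs!j)")
      case True
      then have "x \<subseteq> Y j" using s(1) by blast
      then show ?thesis using s(3) by blast
    next
      case False
      then have "x \<in> vertices (M j)" using Suc(4) s(2) by blast
      then show ?thesis by blast
    qed
    then obtain x' where x': "x' \<in> vertices (M j)" "x \<subseteq> x'" by blast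
    have "j \<le> r" using jr by simp
    from Suc.IH[OF ij this x'(1)] obtain w where "w \<in> vertices (M i)" "x' \<subseteq> w" by blast
    then show ?thesis using x'(2) by blast
  qed
qed

lemma V0_disj: "v \<in> V0 \<Longrightarrow> w \<in> V0 \<Longrightarrow> v \<inter> w \<noteq> {} \<Longrightarrow> v = w"
  using vertices_disj uni by blast

lemma V_disj: "j \<le> r \<Longrightarrow> v \<in> vertices (M j) \<Longrightarrow> w \<in> vertices (M j) \<Longrightarrow> v \<noteq> w \<Longrightarrow> v \<inter> w = {}"
  using vertices_disj uni by blast

definition I :: "nat \<Rightarrow> (nat set \<Rightarrow> nat \<Rightarrow> bool) \<Rightarrow> bool" where
  "I j lab \<longleftrightarrow> (\<forall>x\<in>vertices (M j). \<exists>\<rho>\<in>V0. \<rho> \<subseteq> x \<and>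
     (\<forall>v\<in>V0. v \<subseteq> x \<longrightarrow> (\<forall>s\<le>j. lab v s \<longleftrightarrow> raw_labels Vs v s \<and> v = \<rho>)))"

lemma I_init: "I r (raw_labels Vs)"
  unfolding I_def
proof
  fix x assume x: "x \<in> V0"
  have "\<forall>v\<in>V0. v \<subseteq> x \<longrightarrow> v = x" using V0_disj x vertices_ne by (metis Int_absorb2)
  then show "\<exists>\<rho>\<in>V0. \<rho> \<subseteq> x \<and> (\<forall>v\<in>V0. v \<subseteq> x \<longrightarrow> (\<forall>s\<le>r. raw_labels Vs v s = (raw_labels Vs v s \<and> v = \<rho>)))"
    using x by blast
qed


lemma lenVs: "length Vs = r" using bpr unfolding blueprint_def by simp

lemma rawC: "i < r \<Longrightarrow> z \<in> set (Vs!i) \<Longrightarrow> v \<subseteq> z \<Longrightarrow> raw_labels Vs v (Suc i)"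
proof -
  assume a: "i < r" "z \<in> set (Vs!i)" "v \<subseteq> z"
  have "Suc i \<in> {1..length Vs}" using a(1) lenVs by simp
  moreover have "\<exists>w\<in>set (Vs ! (Suc i - 1)). v \<subseteq> w" using a(2,3) by auto
  ultimately show ?thesis unfolding raw_labels_def by blast
qed

lemma rawD: "raw_labels Vs v (Suc i) \<Longrightarrow> \<exists>z\<in>set (Vs!i). v \<subseteq> z"
  unfolding raw_labels_def by simp

lemma I_D: assumes "I j lab" "x \<in> vertices (M j)"
  obtains \<rho> where "\<rho> \<in> V0" "\<rho> \<subseteq> x"
    "\<And>v s. v \<in> V0 \<Longrightarrow> v \<subseteq> x \<Longrightarrow> s \<le> j \<Longrightarrow> lab v s \<longleftrightarrow> raw_labels Vs v s \<and> v = \<rho>"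
proof -
  have "\<exists>\<rho>\<in>V0. \<rho> \<subseteq> x \<and> (\<forall>v\<in>V0. v \<subseteq> x \<longrightarrow> (\<forall>s\<le>j. lab v s \<longleftrightarrow> raw_labels Vs v s \<and> v = \<rho>))"
    using bspec[OF assms(1)[unfolded I_def] assms(2)] .
  then obtain \<rho> where "\<rho> \<in> V0" "\<rho> \<subseteq> x" "\<forall>v\<in>V0. v \<subseteq> x \<longrightarrow> (\<forall>s\<le>j. lab v s \<longleftrightarrow> raw_labels Vs v s \<and> v = \<rho>)"
    by (elim bexE conjE)
  note h = this
  show ?thesis
  proof (rule that)
    show "\<rho> \<in> V0" "\<rho> \<subseteq> x" using h(1,2) .
    fix v s assume "v \<in> V0" "v \<subseteq> x" "s \<le> j"
    then show "lab v s \<longleftrightarrow> raw_labels Vs v s \<and> v = \<rho>" using h(3) by blast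
  qed
qed

lemma I_D': "I j lab \<Longrightarrow> x \<in> vertices (M j) \<Longrightarrow>
  \<exists>\<rho>\<in>V0. \<rho> \<subseteq> x \<and> (\<forall>v\<in>V0. v \<subseteq> x \<longrightarrow> (\<forall>s\<le>j. lab v s \<longleftrightarrow> raw_labels Vs v s \<and> v = \<rho>))"
  unfolding I_def by (rule bspec)

lemma lab_raw: assumes "I j lab" "j \<le> r" "v \<in> V0" "s \<le> j" "lab v s"
  shows "raw_labels Vs v s"
proof -
  have "\<exists>w\<in>vertices (M j). v \<subseteq> w" by (rule refine[OF assms(2) order.refl assms(3)])
  then obtain x where x: "x \<in> vertices (M j)" "v \<subseteq> x" by blast
  obtain \<rho> where "\<And>v s. v \<in> V0 \<Longrightarrow> v \<subseteq> x \<Longrightarrow> s \<le> j \<Longrightarrow> lab v s \<longleftrightarrow> raw_labels Vs v s \<and> v = \<rho>"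
    using I_D[OF assms(1) x(1)] by metis
  then show ?thesis using assms(3,4,5) x(2) by blast
qed

lemma I_count: assumes "I (Suc i) lab" "i < r"
  shows "card {v\<in>V0. lab v (Suc i)} = length (Vs!i)"
proof -
  let ?C = "set (Vs!i)"
  let ?P = "\<lambda>z \<rho>. \<rho>\<in>V0 \<and> \<rho>\<subseteq>z \<and> (\<forall>v\<in>V0. v \<subseteq> z \<longrightarrow> (\<forall>s\<le>Suc i. lab v s \<longleftrightarrow> raw_labels Vs v s \<and> v=\<rho>))"
  define f where "f z = (SOME \<rho>. ?P z \<rho>)" for z
  have sr: "Suc i \<le> r" using assms(2) by simp
  from step[OF assms(2)] have C: "?C \<subseteq> vertices (M (Suc i))" "distinct (Vs!i)" by blast+
  have fP: "?P z (f z)" if "z \<in> ?C" for z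
  proof -
    have zz: "z \<in> vertices (M (Suc i))" using C(1) that by blast
    have "\<exists>\<rho>. ?P z \<rho>" using I_D'[OF assms(1) zz] unfolding Bex_def .
    then show ?thesis unfolding f_def by (rule someI_ex)
  qed
  have eq: "{v\<in>V0. lab v (Suc i)} = f ` ?C"
  proof
    show "{v\<in>V0. lab v (Suc i)} \<subseteq> f ` ?C"
    proof
      fix v assume v: "v \<in> {v\<in>V0. lab v (Suc i)}"
      then have "raw_labels Vs v (Suc i)" using lab_raw[OF assms(1) sr] by blast
      then obtain z where z: "z \<in> ?C" "v \<subseteq> z" using rawD by blast
      have "v = f z" using fP[OF z(1)] z(2) v by blast
      then show "v \<in> f ` ?C" using z(1) by blast
    qed
    show "f ` ?C \<subseteq> {v\<in>V0. lab v (Suc i)}"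
    proof
      fix w assume "w \<in> f ` ?C"
      then obtain z where z: "z \<in> ?C" "w = f z" by blast
      have "raw_labels Vs (f z) (Suc i)" using rawC[OF assms(2) z(1)] fP[OF z(1)] by blast
      then show "w \<in> {v\<in>V0. lab v (Suc i)}" using fP[OF z(1)] z(2) by blast
    qed
  qed
  have inj: "inj_on f ?C"
  proof
    fix z z' assume z: "z \<in> ?C" "z' \<in> ?C" "f z = f z'"
    have "f z \<subseteq> z \<inter> z'" using fP[OF z(1)] fP[OF z(2)] z(3) by simp
    moreover have "f z \<noteq> {}" using fP[OF z(1)] vertices_ne by blast
    ultimately show "z = z'" using V_disj[OF sr] C(1) z(1,2) by blast
  qed
  show ?thesis unfolding eq card_image[OF inj] using distinct_card[OF C(2)] by simp
qed

lemma I_step: assumes "1 \<le> i" "i < r" "I (Suc i) lab"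
  shows "I i (red_step (M r) (Suc i) lab)"
proof -
  let ?lab' = "red_step (M r) (Suc i) lab"
  let ?reg = "regular_at (M r) lab (Suc i)"
  have sr: "Suc i \<le> r" and ir: "i \<le> r" using assms(2) by simp_all
  from step[OF assms(2)] obtain k where
    s: "\<Union> (set (Vs!i)) = Y i" "vertices (M (Suc i)) = (vertices (M i) - {Y i}) \<union> set (Vs!i)"
       "Y i \<in> vertices (M i)" "set (Vs!i) \<subseteq> vertices (M (Suc i))" "length (Vs!i) = 2*k+1"
    by blast
  have red: "?lab' v s = (lab v s \<and> \<not> ?reg v)" if "s < Suc i" for v s
    using that unfolding red_step_def by simp
  have ne: "v \<noteq> {}" if "v \<in> V0" for v using that vertices_ne by blast
  show ?thesis unfolding I_def
  proof
    fix x assume x: "x \<in> vertices (M i)"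
    show "\<exists>\<rho>\<in>V0. \<rho> \<subseteq> x \<and> (\<forall>v\<in>V0. v \<subseteq> x \<longrightarrow> (\<forall>s\<le>i. ?lab' v s \<longleftrightarrow> raw_labels Vs v s \<and> v = \<rho>))"
    proof (cases "x = Y i")
      case False
      then have xm: "x \<in> vertices (M (Suc i))" using s(2) x by blast
      obtain \<rho> where \<rho>: "\<rho>\<in>V0" "\<rho> \<subseteq> x"
        and Ha: "\<forall>v\<in>V0. v \<subseteq> x \<longrightarrow> (\<forall>s\<le>Suc i. lab v s \<longleftrightarrow> raw_labels Vs v s \<and> v = \<rho>)"
        using I_D'[OF assms(3) xm] by (elim bexE conjE)
        have H: "\<And>v s. v\<in>V0 \<Longrightarrow> v \<subseteq> x \<Longrightarrow> s\<le>Suc i \<Longrightarrow> lab v s \<longleftrightarrow> raw_labels Vs v s \<and> v = \<rho>"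
          using Ha by blast
      have disj: "x \<inter> Y i = {}" using V_disj[OF ir x s(3) False] .
      have nreg: "\<not> ?reg v" if "v \<in> V0" "v \<subseteq> x" for v
      proof
        assume "?reg v"
        then have "lab v (Suc i)" unfolding regular_at_def by blast
        then have "raw_labels Vs v (Suc i)" using lab_raw[OF assms(3) sr that(1)] by blast
        then obtain z where "z \<in> set (Vs!i)" "v \<subseteq> z" using rawD by blast
        then have "v \<subseteq> Y i" using s(1) by blast
        moreover have "v \<noteq> {}" using ne[OF that(1)] .
        ultimately show False using disj that(2) by blast
      qed
      show ?thesis
      proof (intro bexI[of _ \<rho>] conjI ballI impI allI)
        fix v s assume v: "v \<in> V0" "v \<subseteq> x" and "s \<le> i"
        then have "s < Suc i" by simp
        then show "?lab' v s \<longleftrightarrow> raw_labels Vs v s \<and> v = \<rho>"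
          using red nreg[OF v] H v \<open>s \<le> i\<close> by simp
      qed (use \<rho> in auto)
    next
      case True
      define L where "L = {u\<in>V0. lab u (Suc i)}"
      have finL: "finite L" unfolding L_def using vertices_finite by simp
      obtain z0 where z0: "z0 \<in> set (Vs!i)" using s(5) by (cases "Vs!i") auto
      then have xm: "z0 \<in> vertices (M (Suc i))" using s(4) by blast
      obtain \<rho>0 where \<rho>0: "\<rho>0\<in>V0" "\<rho>0 \<subseteq> z0"
        and H0a: "\<forall>v\<in>V0. v \<subseteq> z0 \<longrightarrow> (\<forall>s\<le>Suc i. lab v s \<longleftrightarrow> raw_labels Vs v s \<and> v = \<rho>0)"
        using I_D'[OF assms(3) xm] by (elim bexE conjE)
        have H0: "\<And>v s. v\<in>V0 \<Longrightarrow> v \<subseteq> z0 \<Longrightarrow> s\<le>Suc i \<Longrightarrow> lab v s \<longleftrightarrow> raw_labels Vs v s \<and> v = \<rho>0"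
          using H0a by blast
      have "\<rho>0 \<in> L" unfolding L_def using H0[OF \<rho>0(1,2) order.refl] \<rho>0 rawC[OF assms(2) z0 \<rho>0(2)] by blast
      then have Lne: "L \<noteq> {}" by blast
      have "Min (vpos (M r) ` L) \<in> vpos (M r) ` L" using finL Lne by simp
      then obtain \<rho>s where \<rho>s: "\<rho>s \<in> L" "vpos (M r) \<rho>s = Min (vpos (M r) ` L)" by auto
      have minL: "vpos (M r) \<rho>s \<le> vpos (M r) u" if "u \<in> L" for u
        using \<rho>s(2) finL that by simp
      have reg_iff: "?reg v \<longleftrightarrow> v \<noteq> \<rho>s" if "v \<in> L" for v
      proof
        assume "?reg v"
        then obtain u where "u \<in> L" "vpos (M r) u < vpos (M r) v"
          unfolding regular_at_def L_def by blast
        then show "v \<noteq> \<rho>s" using minL by force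
      next
        assume nv: "v \<noteq> \<rho>s"
        have "vpos (M r) \<rho>s \<noteq> vpos (M r) v"
          using vpos_inj[OF uni[of r]] nv \<rho>s(1) that unfolding L_def by auto
        then have "vpos (M r) \<rho>s < vpos (M r) v" using minL[OF that] by simp
        then show "?reg v" using that \<rho>s(1) unfolding regular_at_def L_def by blast
      qed
      have "raw_labels Vs \<rho>s (Suc i)" using lab_raw[OF assms(3) sr] \<rho>s(1) unfolding L_def by blast
      then obtain zs where "zs \<in> set (Vs!i)" "\<rho>s \<subseteq> zs" using rawD by blast
      then have \<rho>sY: "\<rho>s \<subseteq> Y i" using s(1) by blast
      have inz: "\<exists>z\<in>set (Vs!i). v \<subseteq> z" if v: "v \<in> V0" "v \<subseteq> Y i" for v
      proof -
        obtain x' where x': "x' \<in> vertices (M (Suc i))" "v \<subseteq> x'" using refine[OF sr order.refl v(1)] by blast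
        show ?thesis
        proof (cases "x' \<in> set (Vs!i)")
          case True then show ?thesis using x' by blast
        next
          case False
          then have "x' \<in> vertices (M i)" "x' \<noteq> Y i" using x' s(2) by blast+
          then have "x' \<inter> Y i = {}" using V_disj[OF ir _ s(3)] by blast
          moreover have "v \<noteq> {}" using ne[OF v(1)] .
          ultimately have False using v(2) x'(2) by blast
          then show ?thesis ..
        qed
      qed
      show ?thesis
      proof (intro bexI[of _ \<rho>s] conjI ballI impI allI)
        show "\<rho>s \<subseteq> x" using \<rho>sY True by simp
        show "\<rho>s \<in> V0" using \<rho>s(1) unfolding L_def by blast
        fix v s assume v: "v \<in> V0" "v \<subseteq> x" and sl: "s \<le> i"
        obtain z where z: "z \<in> set (Vs!i)" "v \<subseteq> z" using inz v True by blast
        then have xm: "z \<in> vertices (M (Suc i))" using s(4) by blast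
        obtain \<rho>z where \<rho>z: "\<rho>z\<in>V0" "\<rho>z \<subseteq> z"
          and Hza: "\<forall>v\<in>V0. v \<subseteq> z \<longrightarrow> (\<forall>s\<le>Suc i. lab v s \<longleftrightarrow> raw_labels Vs v s \<and> v = \<rho>z)"
          using I_D'[OF assms(3) xm] by (elim bexE conjE)
          have Hz: "\<And>v s. v\<in>V0 \<Longrightarrow> v \<subseteq> z \<Longrightarrow> s\<le>Suc i \<Longrightarrow> lab v s \<longleftrightarrow> raw_labels Vs v s \<and> v = \<rho>z"
            using Hza by blast
        have Hv: "lab v s' \<longleftrightarrow> raw_labels Vs v s' \<and> v = \<rho>z" if "s' \<le> Suc i" for s'
          using Hz[OF v(1) z(2) that] .
        have rv: "raw_labels Vs v (Suc i)" using rawC[OF assms(2) z] .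
        have l': "?lab' v s = (lab v s \<and> \<not> ?reg v)" using red sl by simp
        show "?lab' v s \<longleftrightarrow> raw_labels Vs v s \<and> v = \<rho>s"
        proof
          assume a: "?lab' v s"
          then have "lab v s" "\<not> ?reg v" using l' by auto
          then have "raw_labels Vs v s" "v = \<rho>z" using Hv sl by auto
          then have "v \<in> L" using Hv rv v(1) unfolding L_def by auto
          then have "v = \<rho>s" using reg_iff \<open>\<not> ?reg v\<close> by blast
          then show "raw_labels Vs v s \<and> v = \<rho>s" using \<open>raw_labels Vs v s\<close> by simp
        next
          assume a: "raw_labels Vs v s \<and> v = \<rho>s"
          then have "v \<in> L" using \<rho>s(1) by simp
          then have "lab v (Suc i)" unfolding L_def by simp
          then have "v = \<rho>z" using Hv by auto
          then have "lab v s" using Hv a sl by auto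
          moreover have "\<not> ?reg v" using reg_iff \<open>v \<in> L\<close> a by blast
          ultimately show "?lab' v s" using l' by simp
        qed
      qed
    qed
  qed
qed

definition cond3 :: "(nat set \<Rightarrow> nat \<Rightarrow> bool) \<Rightarrow> nat \<Rightarrow> nat \<Rightarrow> bool" where
  "cond3 lab h i \<longleftrightarrow> card {v\<in>V0. lab v h \<and> lab v i} \<le> 1 \<and>
     (\<forall>v\<in>V0. lab v h \<and> lab v i \<longrightarrow> (\<forall>u\<in>V0. lab u i \<longrightarrow> vpos (M r) v \<le> vpos (M r) u))"

definition P :: "nat \<Rightarrow> (nat set \<Rightarrow> nat \<Rightarrow> bool) \<Rightarrow> bool" where
  "P j lab \<longleftrightarrow> I j lab \<and> (\<forall>s. j < s \<and> s \<le> r \<longrightarrow> card {v\<in>V0. lab v s} = length (Vs!(s-1))) \<and>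
     (\<forall>h i. 1 \<le> h \<and> h < i \<and> j < i \<and> i \<le> r \<longrightarrow> cond3 lab h i)"

lemma red_hi: "\<not> s < j \<Longrightarrow> red_step m j lab v s = lab v s"
  by (simp add: red_step_def)

lemma red_le: "red_step m j lab v s \<Longrightarrow> lab v s"
  by (simp add: red_step_def split: if_splits)

lemma cond3_mono: assumes "cond3 lab h i" "\<And>v s. lab' v s \<Longrightarrow> lab v s" "\<And>v. lab' v i = lab v i"
  shows "cond3 lab' h i"
proof -
  have "{v\<in>V0. lab' v h \<and> lab' v i} \<subseteq> {v\<in>V0. lab v h \<and> lab v i}" using assms(2) by blast
  then have "card {v\<in>V0. lab' v h \<and> lab' v i} \<le> card {v\<in>V0. lab v h \<and> lab v i}"
    by (rule card_mono[rotated]) (simp add: vertices_finite)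
  then show ?thesis using assms unfolding cond3_def by (metis (no_types, lifting) le_trans)
qed

lemma cond3_new: assumes "h < j" shows "cond3 (red_step (M r) j lab) h j"
proof -
  let ?l = "red_step (M r) j lab"
  have minp: "\<forall>u\<in>V0. ?l u j \<longrightarrow> vpos (M r) v \<le> vpos (M r) u" if "v \<in> V0" "?l v h" "?l v j" for v
  proof -
    have "\<not> regular_at (M r) lab j v" "lab v j" using that assms unfolding red_step_def by (auto split: if_splits)
    then have "\<forall>u\<in>V0. lab u j \<longrightarrow> \<not> vpos (M r) u < vpos (M r) v" unfolding regular_at_def by blast
    moreover have "\<And>u. ?l u j = lab u j" using red_hi by simp
    ultimately show ?thesis by (simp add: not_less)
  qed
  have "card {v\<in>V0. ?l v h \<and> ?l v j} \<le> Suc 0"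
  proof (rule card_le_Suc0_iff_eq[THEN iffD2])
    show "finite {v\<in>V0. ?l v h \<and> ?l v j}" by (simp add: vertices_finite)
    show "\<forall>a\<in>{v\<in>V0. ?l v h \<and> ?l v j}. \<forall>b\<in>{v\<in>V0. ?l v h \<and> ?l v j}. a = b"
    proof (intro ballI)
      fix a b assume a: "a \<in> {v\<in>V0. ?l v h \<and> ?l v j}" and b: "b \<in> {v\<in>V0. ?l v h \<and> ?l v j}"
      have "vpos (M r) a \<le> vpos (M r) b" using minp a b by blast
      moreover have "vpos (M r) b \<le> vpos (M r) a" using minp a b by blast
      ultimately have "vpos (M r) a = vpos (M r) b" by simp
      then show "a = b" using vpos_inj[OF uni[of r]] a b by blast
    qed
  qed
  then show ?thesis unfolding cond3_def using minp by simp
qed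

lemma P_I: "P j lab \<Longrightarrow> I j lab" unfolding P_def by (elim conjE)
lemma P_cnt: "P j lab \<Longrightarrow> j < s \<Longrightarrow> s \<le> r \<Longrightarrow> card {v\<in>V0. lab v s} = length (Vs!(s-1))"
  unfolding P_def by (elim conjE) (erule allE, erule impE, rule conjI, assumption+)
lemma P_c3: "P j lab \<Longrightarrow> 1 \<le> h \<Longrightarrow> h < i \<Longrightarrow> j < i \<Longrightarrow> i \<le> r \<Longrightarrow> cond3 lab h i"
  unfolding P_def by (elim conjE) (erule allE, erule allE, erule impE, (intro conjI; assumption), assumption)
lemma P_intro: assumes A: "I j lab" and B: "\<And>s. j < s \<Longrightarrow> s \<le> r \<Longrightarrow> card {v\<in>V0. lab v s} = length (Vs!(s-1))"
  and C: "\<And>h i. 1 \<le> h \<Longrightarrow> h < i \<Longrightarrow> j < i \<Longrightarrow> i \<le> r \<Longrightarrow> cond3 lab h i" shows "P j lab"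
proof -
  have b: "\<forall>s. j < s \<and> s \<le> r \<longrightarrow> card {v\<in>V0. lab v s} = length (Vs!(s-1))"
  proof (intro allI impI)
    fix s assume "j < s \<and> s \<le> r" then show "card {v\<in>V0. lab v s} = length (Vs!(s-1))" using B by simp
  qed
  have c: "\<forall>h i. 1 \<le> h \<and> h < i \<and> j < i \<and> i \<le> r \<longrightarrow> cond3 lab h i"
  proof (intro allI impI)
    fix h i assume "1 \<le> h \<and> h < i \<and> j < i \<and> i \<le> r" then show "cond3 lab h i" using C by simp
  qed
  show ?thesis unfolding P_def using A b c by (intro conjI)
qed

lemma P_step: assumes "1 \<le> i" "i < r" "P (Suc i) lab"
  shows "P i (red_step (M r) (Suc i) lab)"
proof -
  let ?l = "red_step (M r) (Suc i) lab"
  have I1: "I (Suc i) lab" using P_I[OF assms(3)] .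
  have hi: "\<And>v s. \<not> s < Suc i \<Longrightarrow> ?l v s = lab v s" by (rule red_hi)
  have A: "I i ?l" using I_step[OF assms(1,2) I1] .
  have B: "card {v\<in>V0. ?l v s} = length (Vs!(s-1))" if "i < s" "s \<le> r" for s
  proof (cases "s = Suc i")
    case True
    have "{v\<in>V0. ?l v s} = {v\<in>V0. lab v (Suc i)}" using hi True by simp
    then show ?thesis using I_count[OF I1 assms(2)] True by simp
  next
    case False
    then have "Suc i < s" using that by simp
    then have "card {v\<in>V0. lab v s} = length (Vs!(s-1))" using P_cnt[OF assms(3) _ that(2)] by blast
    moreover have "{v\<in>V0. ?l v s} = {v\<in>V0. lab v s}" using hi \<open>Suc i < s\<close> by simp
    ultimately show ?thesis by simp
  qed
  have C: "cond3 ?l h i'" if "1 \<le> h" "h < i'" "i < i'" "i' \<le> r" for h i'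
  proof (cases "i' = Suc i")
    case True
    then show ?thesis using cond3_new that by simp
  next
    case False
    then have "Suc i < i'" using that by simp
    then have c3f: "cond3 lab h i'" using P_c3[OF assms(3) that(1,2) _ that(4)] by blast
    have e: "\<And>v. ?l v i' = lab v i'" using hi \<open>Suc i < i'\<close> by simp
    show ?thesis by (rule cond3_mono[where lab'="?l", OF c3f red_le[of "M r" "Suc i" lab] e])
  qed
  show ?thesis by (rule P_intro[OF A B C])
qed

lemma P_init: "P r (raw_labels Vs)"
  by (rule P_intro[OF I_init]) simp_all

end

lemma red_from_inv:
  assumes "1 \<le> n" "Q n lab"
    "\<And>j lab. 1 \<le> j \<Longrightarrow> j < n \<Longrightarrow> Q (Suc j) lab \<Longrightarrow> Q j (red_step m (Suc j) lab)"
  shows "Q 1 (red_from m lab n)"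
  using assms
proof (induction n arbitrary: lab)
  case 0 then show ?case by simp
next
  case (Suc k)
  show ?case
  proof (cases "k = 0")
    case True then show ?thesis using Suc.prems by simp
  next
    case False
    then have "red_from m lab (Suc k) = red_from m (red_step m (Suc k) lab) k" by simp
    moreover have "Q k (red_step m (Suc k) lab)" using Suc.prems(2,3) False by simp
    moreover have "\<And>j lab. 1 \<le> j \<Longrightarrow> j < k \<Longrightarrow> Q (Suc j) lab \<Longrightarrow> Q j (red_step m (Suc j) lab)"
      using Suc.prems(3) by simp
    ultimately show ?thesis using Suc.IH[of "red_step m (Suc k) lab"] False by simp
  qed
qed

lemma double_count: assumes "finite A" "finite B"
  shows "(\<Sum>a\<in>A. card {b\<in>B. Q a b}) = (\<Sum>b\<in>B. card {a\<in>A. Q a b})"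
proof -
  have e1: "card {b\<in>B. Q a b} = (\<Sum>b\<in>B. if Q a b then 1 else 0)" for a
    using sum.inter_filter[OF assms(2), of "\<lambda>_. 1::nat" "Q a"] by simp
  have e2: "card {a\<in>A. Q a b} = (\<Sum>a\<in>A. if Q a b then 1 else 0)" for b
    using sum.inter_filter[OF assms(1), of "\<lambda>_. 1::nat" "\<lambda>a. Q a b"] by simp
  show ?thesis unfolding e1 e2 by (rule sum.swap)
qed

context bp begin

lemma main: "1 \<le> r \<and> r \<le> genus (M 0) \<and> lambda_tree (genus (M 0)) r (M r) (induced_labels (M r) Vs)"
proof -
  let ?g = "genus (M 0)"
  let ?lab = "induced_labels (M r) Vs"
  have r1: "1 \<le> r" and g0: "genus (M r) = 0" using bpr unfolding blueprint_def by auto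
  have P1: "P 1 ?lab" unfolding induced_labels_def lenVs
    by (rule red_from_inv[where Q=P, OF r1 P_init]) (rule P_step, auto)
  from genus_sum[of r] g0 have gs: "(\<Sum>i<r. length (Vs!i)) = 2 * ?g + r" "r \<le> ?g" by auto
  have Pc: "\<forall>s. 1 < s \<and> s \<le> r \<longrightarrow> card {v\<in>V0. ?lab v s} = length (Vs!(s-1))"
    and Pd: "\<forall>h i. 1 \<le> h \<and> h < i \<and> 1 < i \<and> i \<le> r \<longrightarrow> cond3 ?lab h i"
    using P_cnt[OF P1] P_c3[OF P1] by blast+
  have cnt: "card {v\<in>V0. ?lab v h} = length (Vs!(h-1))" if "h \<in> {1..r}" for h
  proof (cases "h = 1")
    case True
    have "I (Suc 0) ?lab" using P_I[OF P1] by simp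
    moreover have "0 < r" using r1 by linarith
    ultimately have "card {v\<in>V0. ?lab v (Suc 0)} = length (Vs!0)" by (rule I_count)
    then show ?thesis using True by simp
  next
    case False
    then have "1 < h" "h \<le> r" using that by auto
    then show ?thesis using Pc by blast
  qed
  have odds: "odd (card {v\<in>V0. ?lab v h})" if "h \<in> {1..r}" for h
  proof -
    have "h - 1 < r" using that by auto
    from step[OF this] obtain k where "length (Vs!(h-1)) = 2*k+1" by blast
    then show ?thesis using cnt[OF that] by simp
  qed
  have "(\<Sum>v\<in>V0. card {h\<in>{1..r}. ?lab v h}) = (\<Sum>h\<in>{1..r}. card {v\<in>V0. ?lab v h})"
    by (rule double_count) (simp_all add: vertices_finite)
  also have "\<dots> = (\<Sum>h\<in>{1..r}. length (Vs!(h-1)))" using cnt by (rule sum.cong[OF refl])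
  also have "\<dots> = (\<Sum>i<r. length (Vs!i))" using sum.atLeast1_atMost_eq[of "\<lambda>h. length (Vs!(h-1))" r] by simp
  finally have sm: "(\<Sum>v\<in>V0. card {h\<in>{1..r}. ?lab v h}) = 2 * ?g + r" using gs by simp
  have c3: "\<forall>h i. 1 \<le> h \<and> h < i \<and> i \<le> r \<longrightarrow>
        card {v\<in>V0. ?lab v h \<and> ?lab v i} \<le> 1 \<and>
        (\<forall>v\<in>V0. ?lab v h \<and> ?lab v i \<longrightarrow> (\<forall>u\<in>V0. ?lab u i \<longrightarrow> vpos (M r) v \<le> vpos (M r) u))"
  proof (intro allI impI)
    fix h i assume a: "1 \<le> h \<and> h < i \<and> i \<le> r"
    then have "1 < i" by linarith
    then have "cond3 ?lab h i" using Pd a by blast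
    then show "card {v\<in>V0. ?lab v h \<and> ?lab v i} \<le> 1 \<and>
        (\<forall>v\<in>V0. ?lab v h \<and> ?lab v i \<longrightarrow> (\<forall>u\<in>V0. ?lab u i \<longrightarrow> vpos (M r) v \<le> vpos (M r) u))"
      unfolding cond3_def .
  qed
  have "lambda_tree ?g r (M r) ?lab" unfolding lambda_tree_def
  proof (intro conjI)
    show "unicellular (M r)" using uni[of r] by simp
    show "genus (M r) = 0" by (rule g0)
    show "1 \<le> r" by (rule r1)
    show "r \<le> ?g" by (rule gs(2))
    show "(\<Sum>v\<in>V0. card {h\<in>{1..r}. ?lab v h}) = 2 * ?g + r" by (rule sm)
    show "\<forall>h\<in>{1..r}. odd (card {v\<in>V0. ?lab v h})" using odds by blast
  qed (rule c3)
  then show ?thesis using r1 gs(2) by (intro conjI)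
qed

end

theorem lemma1:
  fixes Xi :: "umap \<Rightarrow> nat \<Rightarrow> umap \<times> nat set list"
    and m :: umap and g :: nat
    and ms :: "umap list" and ts :: "nat list" and Vs :: "nat set list list"
  assumes "slicing_map Xi"
    and "unicellular m" and "genus m = g" and "g \<ge> 1"
    and "blueprint Xi m ms ts Vs"
  shows "1 \<le> length ts \<and> length ts \<le> g \<and>
         lambda_tree g (length ts) (ms ! length ts) (induced_labels (ms ! length ts) Vs)"
proof -
  have m0: "ms ! 0 = m" using assms(5) unfolding blueprint_def by simp
  interpret bp Xi ms ts Vs
    using assms m0 by unfold_locales simp_all
  have gg: "genus (ms ! 0) = g" using m0 assms(3) by simp
  show ?thesis using main unfolding gg .
qed

end
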